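(* Let $n\ge 2$, $m\ge 1$ and consider a star junction in which pipes $P_1,\dots,P_n$ connect at a single node to pipes $P_{n+1},\dots,P_{n+m}$. Suppose real differentiable functions $p_{j,\ell},p_{j,r},q_{j,\ell},q_{j,r}$ ($j=1,\dots,n+m$) satisfy, for all $t$, \[ \dot p_{j,r}=c_j(q_{j,r}-q_{j,\ell}),\qquad \dot q_{j,\ell}=b_jp_{j,r}+d_jp_{j,\ell}+e_jq_{j,\ell}, \] and the junction constraints $p_{1,r}=\dots=p_{n,r}=p_{n+1,\ell}=\dots=p_{n+m,\ell}$ and $\sum_{k=1}^n q_{k,r}=\sum_{j=n+1}^{n+m}q_{j,\ell}$. Define \[ x=[p_{1,r},p_{n+1,r},\dots,p_{n+m,r},q_{1,\ell},\dots,q_{n+m,\ell}]^\top\in\mathbb R^{n+2m+1},\quad u=[p_{1,\ell},\dots,p_{n,\ell},q_{n+1,r},\dots,q_{n+m,r}]^\top\in\mathbb R^{n+m}, \] \[ y=[p_{n+1,r},\dots,p_{n+m,r},q_{1,\ell},\dots,q_{n,\ell}]^\top\in\mathbb R^{n+m}. \] Then $\dot x=Ax+Bu$, $y=Cx$, where, with row blocks and column blocks of $A$ of sizes $(1,m,n,m)$, \[ A=\begin{bmatrix} 0&\mathbf 0_m^\top&-a\mathbf 1_n^\top&a\mathbf 1_m^\top\\ \mathbf 0_m&\mathbf 0_{m,m}&\mathbf 0_{m,n}&-\operatorname{diag}(c_{n+1},\dots,c_{n+m})\\ (b_1,\dots,b_n)^\top&\mathbf 0_{n,m}&\operatorname{diag}(e_1,\dots,e_n)&\mathbf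 0_{n,m}\\ (d_{n+1},\dots,d_{n+m})^\top&\operatorname{diag}(b_{n+1},\dots,b_{n+m})&\mathbf 0_{m,n}&\operatorname{diag}(e_{n+1},\dots,e_{n+m}) \end{bmatrix}, \] \[ B=\begin{bmatrix} \mathbf 0_n^\top&\mathbf 0_m^\top\\ \mathbf 0_{m,n}&\operatorname{diag}(c_{n+1},\dots,c_{n+m})\\ \operatorname{diag}(d_1,\dots,d_n)&\mathbf 0_{n,m}\\ \mathbf 0_{m,n}&\mathbf 0_{m,m} \end{bmatrix},\qquad C=\begin{bmatrix}\mathbf 0_{n+m}&I_{n+m}&\mathbf 0_{n+m,m}\end{bmatrix}, \] and $a=c_1\left(\sum_{j=1}^n\prod_{i=1,\,i\neq j}^n c_i\right)^{-1}\prod_{i=2}^n c_i$.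
   Context: Linearized isothermal one-dimensional pipe flow model: $p$ pressure, $q$ mass flow, subscripts $\ell,r$ the left ($x=0$) and right ($x=L_j$) ends of pipe $P_j$. Coefficients: $c_j=-\frac{R_sT_0z_0}{A_jL_j}$, $b_j=-\frac{A_j}{L_j}$, $d_j=\frac{A_j}{L_j}+\frac{\lambda_j R_sT_0z_0}{2D_jA_j}\frac{q_{ss,j}|q_{ss,j}|}{p_{\ell,ss,j}^2}-\frac{A_jgh_j}{R_sT_0z_0L_j}$, $e_j=-\frac{\lambda_j R_sT_0z_0}{D_jA_j}\frac{|q_{ss,j}|}{p_{\ell,ss,j}}$, with positive constants $R_s,T_0,z_0$, gravity $g$, and per-pipe area $A_j>0$, length $L_j>0$, diameter $D_j>0$, friction factor $\lambda_j$, elevation difference $h_j$, nominal flow $q_{ss,j}>0$, nominal left pressure $p_{\ell,ss,j}>0$; hence all $c_j<0$. $\mathbf 0_i$, $\mathbf 0_{i,j}$ are zero vectors/matrices (a vector $\mathbf 0_i$ used as a block is a column), $\mathbf 1_i$ the all-ones column vector, $I_k$ the identity. *)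

theory Defs
  imports Complex_Main "Jordan_Normal_Form.Matrix"
begin

(* Pipes are indexed 1..n+m; vector/matrix indices (JNF) are 0-based. *)

definition coef_c :: "real \<Rightarrow> real \<Rightarrow> real \<Rightarrow> real \<Rightarrow> real \<Rightarrow> real" where
  "coef_c Rs T0 z0 Aj Lj = - (Rs * T0 * z0) / (Aj * Lj)"

definition coef_b :: "real \<Rightarrow> real \<Rightarrow> real" where
  "coef_b Aj Lj = - (Aj / Lj)"

definition coef_d :: "real \<Rightarrow> real \<Rightarrow> real \<Rightarrow> real \<Rightarrow> real \<Rightarrow> real \<Rightarrow> real \<Rightarrow> real
    \<Rightarrow> real \<Rightarrow> real \<Rightarrow> real \<Rightarrow> real" where
  "coef_d Rs T0 z0 g Aj Lj Dj lamj hj qss pss =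
     Aj / Lj + (lamj * Rs * T0 * z0) / (2 * Dj * Aj) * (qss * \<bar>qss\<bar>) / pss ^ 2
     - (Aj * g * hj) / (Rs * T0 * z0 * Lj)"

definition coef_e :: "real \<Rightarrow> real \<Rightarrow> real \<Rightarrow> real \<Rightarrow> real \<Rightarrow> real \<Rightarrow> real \<Rightarrow> real \<Rightarrow> real" where
  "coef_e Rs T0 z0 Aj Dj lamj qss pss = - ((lamj * Rs * T0 * z0) / (Dj * Aj)) * \<bar>qss\<bar> / pss"

definition junction_a :: "nat \<Rightarrow> (nat \<Rightarrow> real) \<Rightarrow> real" where
  "junction_a n c = c 1 * inverse (\<Sum>j = 1..n. \<Prod>i \<in> {1..n} - {j}. c i) * (\<Prod>i = 2..n. c i)"

definition state_x :: "nat \<Rightarrow> nat \<Rightarrow> (nat \<Rightarrow> real \<Rightarrow> real) \<Rightarrow> (nat \<Rightarrow> real \<Rightarrow> real)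
    \<Rightarrow> real \<Rightarrow> real vec" where
  "state_x n m pr ql t = vec (n + 2 * m + 1)
     (\<lambda>i. if i = 0 then pr 1 t else if i \<le> m then pr (n + i) t else ql (i - m) t)"

definition input_u :: "nat \<Rightarrow> nat \<Rightarrow> (nat \<Rightarrow> real \<Rightarrow> real) \<Rightarrow> (nat \<Rightarrow> real \<Rightarrow> real)
    \<Rightarrow> real \<Rightarrow> real vec" where
  "input_u n m pl qr t = vec (n + m) (\<lambda>i. if i < n then pl (i + 1) t else qr (i + 1) t)"

definition output_y :: "nat \<Rightarrow> nat \<Rightarrow> (nat \<Rightarrow> real \<Rightarrow> real) \<Rightarrow> (nat \<Rightarrow> real \<Rightarrow> real)
    \<Rightarrow> real \<Rightarrow> real vec" where
  "output_y n m pr ql t = vec (n + m) (\<lambda>i. if i < m then pr (n + i + 1) t else ql (i - m + 1) t)"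

(* Matrix A, written entrywise; row/column blocks have sizes (1,m,n,m), i.e.
   index 0 | 1..m | m+1..m+n | m+n+1..n+2m *)
definition sys_A :: "nat \<Rightarrow> nat \<Rightarrow> real \<Rightarrow> (nat \<Rightarrow> real) \<Rightarrow> (nat \<Rightarrow> real) \<Rightarrow> (nat \<Rightarrow> real)
    \<Rightarrow> (nat \<Rightarrow> real) \<Rightarrow> real mat" where
  "sys_A n m a b c d e = mat (n + 2 * m + 1) (n + 2 * m + 1) (\<lambda>(i, k).
     if i = 0 then
       (if m + 1 \<le> k \<and> k \<le> m + n then - a else if m + n + 1 \<le> k then a else 0)
     else if i \<le> m then
       (if k = m + n + i then - c (n + i) else 0)
     else if i \<le> m + n then
       (if k = 0 then b (i - m) else if k = i then e (i - m) else 0)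
     else
       (if k = 0 then d (i - m) else if k = i - m - n then b (i - m)
        else if k = i then e (i - m) else 0))"

definition sys_B :: "nat \<Rightarrow> nat \<Rightarrow> (nat \<Rightarrow> real) \<Rightarrow> (nat \<Rightarrow> real) \<Rightarrow> real mat" where
  "sys_B n m c d = mat (n + 2 * m + 1) (n + m) (\<lambda>(i, k).
     if i = 0 then 0
     else if i \<le> m then (if k = n + i - 1 then c (n + i) else 0)
     else if i \<le> m + n then (if k = i - m - 1 then d (i - m) else 0)
     else 0)"

definition sys_C :: "nat \<Rightarrow> nat \<Rightarrow> real mat" where
  "sys_C n m = mat (n + m) (n + 2 * m + 1) (\<lambda>(i, k). if k = i + 1 then 1 else 0)"

end

theory Submission
  imports Defs
begin


lemma mv_sum:
  assumes "i < dim_row A" "dim_col A = dim_vec v"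
  shows "(A *\<^sub>v v) $ i = (\<Sum>k<dim_vec v. A $$ (i,k) * v $ k)"
  using assms by (simp add: scalar_prod_def atLeast0LessThan)

lemma mv_mat_vec:
  assumes "i < nr"
  shows "(mat nr nc f *\<^sub>v vec nc g) $ i = (\<Sum>k<nc. f (i,k) * g k)"
  using assms by (auto simp: scalar_prod_def atLeast0LessThan intro!: sum.cong)

lemma mv2:
  assumes "i < nr"
  shows "(mat nr nc f *\<^sub>v vec nc g + mat nr nc' f' *\<^sub>v vec nc' g') $ i
     = (\<Sum>k<nc. f (i,k) * g k) + (\<Sum>k<nc'. f' (i,k) * g' k)"
  using assms by (simp add: mv_mat_vec del: index_mult_mat_vec)

lemma sum_shift_sub:
  fixes m p q :: nat
  shows "(\<Sum>k\<in>{m+p..<m+q}. f (k - m)) = (\<Sum>j\<in>{p..<q}. (f j :: real))"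
  using sum.shift_bounds_nat_ivl[of "\<lambda>k. f (k - m)" p m q] by (simp add: add.commute)

lemma sum_support:
  "finite A \<Longrightarrow> S \<subseteq> A \<Longrightarrow> (\<And>k. k \<in> A \<Longrightarrow> k \<notin> S \<Longrightarrow> g k = 0) \<Longrightarrow> sum g A = sum g S"
  by (metis DiffE sum.mono_neutral_right)

theorem corollary4:
  fixes n m :: nat
    and Rs T0 z0 g :: real
    and Ar L D lam h qss pss :: "nat \<Rightarrow> real"
    and c b d e :: "nat \<Rightarrow> real"
    and pl pr ql qr :: "nat \<Rightarrow> real \<Rightarrow> real"
  assumes n2: "n \<ge> 2" and m1: "m \<ge> 1"
    and consts_pos: "Rs > 0" "T0 > 0" "z0 > 0"
    and pipe_pos: "\<And>j. j \<in> {1..n+m} \<Longrightarrow>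
                     Ar j > 0 \<and> L j > 0 \<and> D j > 0 \<and> qss j > 0 \<and> pss j > 0"
    and c_def: "\<And>j. j \<in> {1..n+m} \<Longrightarrow> c j = coef_c Rs T0 z0 (Ar j) (L j)"
    and b_def: "\<And>j. j \<in> {1..n+m} \<Longrightarrow> b j = coef_b (Ar j) (L j)"
    and d_def: "\<And>j. j \<in> {1..n+m} \<Longrightarrow>
                  d j = coef_d Rs T0 z0 g (Ar j) (L j) (D j) (lam j) (h j) (qss j) (pss j)"
    and e_def: "\<And>j. j \<in> {1..n+m} \<Longrightarrow>
                  e j = coef_e Rs T0 z0 (Ar j) (D j) (lam j) (qss j) (pss j)"
    and diff: "\<And>j t. j \<in> {1..n+m} \<Longrightarrow>
                 pl j differentiable at t \<and> pr j differentiable at t \<and>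
                 ql j differentiable at t \<and> qr j differentiable at t"
    and ode_p: "\<And>j t. j \<in> {1..n+m} \<Longrightarrow>
                  (pr j has_real_derivative c j * (qr j t - ql j t)) (at t)"
    and ode_q: "\<And>j t. j \<in> {1..n+m} \<Longrightarrow>
                  (ql j has_real_derivative b j * pr j t + d j * pl j t + e j * ql j t) (at t)"
    and junc_p_in: "\<And>k t. k \<in> {1..n} \<Longrightarrow> pr k t = pr 1 t"
    and junc_p_out: "\<And>j t. j \<in> {n+1..n+m} \<Longrightarrow> pl j t = pr 1 t"
    and junc_q: "\<And>t. (\<Sum>k = 1..n. qr k t) = (\<Sum>j = n+1..n+m. ql j t)"
  shows "(\<forall>t. \<forall>i < n + 2 * m + 1.
            ((\<lambda>s. state_x n m pr ql s $ i) has_real_derivative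
              (sys_A n m (junction_a n c) b c d e *\<^sub>v state_x n m pr ql t
               + sys_B n m c d *\<^sub>v input_u n m pl qr t) $ i) (at t))
       \<and> (\<forall>t. output_y n m pr ql t = sys_C n m *\<^sub>v state_x n m pr ql t)"

proof -
  define N where "N = n + 2 * m + 1"
  have cneg: "c j < 0" if "j \<in> {1..n+m}" for j
  proof -
    have "Ar j * L j > 0" using pipe_pos[OF that] by simp
    moreover have "Rs * T0 * z0 > 0" using consts_pos by simp
    ultimately show ?thesis using c_def[OF that] by (simp add: coef_c_def)
  qed
  have cnz: "c j \<noteq> 0" if "j \<in> {1..n}" for j using cneg[of j] that by fastforce
  define S where "S = (\<Sum>j=1..n. 1 / c j)"
  have "S < (\<Sum>j=1..n. 0)" unfolding S_def
    by (rule sum_strict_mono) (use n2 cneg in \<open>auto simp: divide_neg_pos\<close>)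
  hence Sneg: "S < 0" by simp
  define P where "P = (\<Prod>i=1..n. c i)"
  have Pnz: "P \<noteq> 0" unfolding P_def using cnz by (simp add: prod_zero_iff)
  have a_eq: "junction_a n c = 1 / S"
  proof -
    have "(\<Sum>j = 1..n. \<Prod>i \<in> {1..n} - {j}. c i) = (\<Sum>j = 1..n. P / c j)"
      unfolding P_def by (rule sum.cong) (auto simp: prod_diff1 cnz)
    also have "\<dots> = P * S" unfolding S_def by (simp add: sum_distrib_left)
    finally have 1: "(\<Sum>j = 1..n. \<Prod>i \<in> {1..n} - {j}. c i) = P * S" .
    have 2: "c 1 * (\<Prod>i = 2..n. c i) = P" unfolding P_def using n2
      by (metis Suc_1 Suc_le_D numeral_2_eq_2 one_le_numeral prod.atLeast_Suc_atMost order.trans)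
    show ?thesis unfolding junction_a_def using 1 2 Pnz Sneg
      by (simp add: field_simps)
  qed
  show ?thesis
  proof (intro conjI allI impI)
    fix t
    show "output_y n m pr ql t = sys_C n m *\<^sub>v state_x n m pr ql t"
    proof (rule eq_vecI)
      fix i assume i: "i < dim_vec (sys_C n m *\<^sub>v state_x n m pr ql t)"
      hence i': "i < n + m" by (simp add: sys_C_def)
      have "(sys_C n m *\<^sub>v state_x n m pr ql t) $ i
         = (\<Sum>k<n + 2 * m + 1. (if k = i + 1 then 1 else 0) * (if k = 0 then pr 1 t else if k \<le> m then pr (n + k) t else ql (k - m) t))"
        using i' unfolding sys_C_def state_x_def by (subst mv_mat_vec) auto
      also have "\<dots> = (\<Sum>k\<in>{i+1}. (if k = i + 1 then 1 else 0) * (if k = 0 then pr 1 t else if k \<le> m then pr (n + k) t else ql (k - m) t))"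
        by (rule sum_support) (use i' in auto)
      also have "\<dots> = (if i + 1 \<le> m then pr (n + (i+1)) t else ql (i + 1 - m) t)"
        by simp
      finally show "output_y n m pr ql t $ i = (sys_C n m *\<^sub>v state_x n m pr ql t) $ i"
        using i' by (simp add: output_y_def Suc_diff_le)
    qed (simp add: output_y_def sys_C_def)
  next
    fix t i assume i: "i < n + 2 * m + 1"
    show "((\<lambda>s. state_x n m pr ql s $ i) has_real_derivative
              (sys_A n m (junction_a n c) b c d e *\<^sub>v state_x n m pr ql t
               + sys_B n m c d *\<^sub>v input_u n m pl qr t) $ i) (at t)"
    proof -
      define a where "a = junction_a n c"
      define FA where "FA = (\<lambda>(i, k).
     if i = 0 then
       (if m + 1 \<le> k \<and> k \<le> m + n then - a else if m + n + 1 \<le> k then a else 0)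
     else if i \<le> m then
       (if k = m + n + i then - c (n + i) else 0)
     else if i \<le> m + n then
       (if k = 0 then b (i - m) else if k = i then e (i - m) else 0)
     else
       (if k = 0 then d (i - m) else if k = i - m - n then b (i - m)
        else if k = i then e (i - m) else 0))"
      define FB where "FB = (\<lambda>(i, k).
     if i = 0 then 0
     else if i \<le> m then (if k = n + i - 1 then c (n + i) else 0)
     else if i \<le> m + n then (if k = i - m - 1 then d (i - m) else 0)
     else 0)"
      define gx where "gx = (\<lambda>s i. if i = 0 then pr 1 s else if i \<le> m then pr (n + i) s else ql (i - m) s)"
      define gu where "gu = (\<lambda>s i. if i < n then pl (i + 1) s else qr (i + 1) s)"
      have sA: "sys_A n m (junction_a n c) b c d e = mat N N FA"
        unfolding sys_A_def FA_def N_def a_def by simp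
      have sB: "sys_B n m c d = mat N (n+m) FB"
        unfolding sys_B_def FB_def N_def by simp
      have sX: "\<And>s. state_x n m pr ql s = vec N (gx s)"
        unfolding state_x_def gx_def N_def by simp
      have sU: "\<And>s. input_u n m pl qr s = vec (n+m) (gu s)"
        unfolding input_u_def gu_def by simp
      have iN: "i < N" using i N_def by simp
      have R: "(sys_A n m (junction_a n c) b c d e *\<^sub>v state_x n m pr ql t
               + sys_B n m c d *\<^sub>v input_u n m pl qr t) $ i
            = (\<Sum>k<N. FA (i,k) * gx t k) + (\<Sum>k<n+m. FB (i,k) * gu t k)"
        unfolding sA sB sX sU by (rule mv2[OF iN])
      have L: "(\<lambda>s. state_x n m pr ql s $ i) = (\<lambda>s. gx s i)"
        unfolding sX using iN by simp
      show ?thesis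
      proof -
        consider "i = 0" | "1 \<le> i \<and> i \<le> m" | "m < i \<and> i \<le> m + n" | "m + n < i"
          by linarith
        then show ?thesis
        proof cases
          case 1
          have B0: "(\<Sum>k<n+m. FB (i,k) * gu t k) = 0" using 1 by (simp add: FB_def)
          have A1: "(\<Sum>k<N. FA (i,k) * gx t k) = (\<Sum>k\<in>{m+1..<N}. FA (i,k) * gx t k)"
            by (rule sum_support) (use 1 in \<open>auto simp: FA_def\<close>)
          also have "\<dots> = (\<Sum>k\<in>{m+1..<m+n+1}. FA (i,k) * gx t k) + (\<Sum>k\<in>{m+n+1..<N}. FA (i,k) * gx t k)"
            by (rule sum.atLeastLessThan_concat[symmetric]) (auto simp: N_def)
          also have "(\<Sum>k\<in>{m+1..<m+n+1}. FA (i,k) * gx t k) = (\<Sum>k\<in>{m+1..<m+(n+1)}. -a * ql (k - m) t)"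
            by (rule sum.cong) (use 1 in \<open>auto simp: FA_def gx_def\<close>)
          also have "\<dots> = -a * (\<Sum>j\<in>{1..<n+1}. ql j t)"
            by (simp only: sum_distrib_left[symmetric] sum_shift_sub[of "\<lambda>j. ql j t"])
          also have "(\<Sum>k\<in>{m+n+1..<N}. FA (i,k) * gx t k) = (\<Sum>k\<in>{m+(n+1)..<m+(n+m+1)}. a * ql (k - m) t)"
            by (rule sum.cong) (use 1 in \<open>auto simp: FA_def gx_def N_def\<close>)
          also have "\<dots> = a * (\<Sum>j\<in>{n+1..<n+m+1}. ql j t)"
            by (simp only: sum_distrib_left[symmetric] sum_shift_sub[of "\<lambda>j. ql j t"])
          finally have A0: "(\<Sum>k<N. FA (i,k) * gx t k) = -a * (\<Sum>j=1..n. ql j t) + a * (\<Sum>j=n+1..n+m. ql j t)"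
            by (simp add: atLeastLessThanSuc_atLeastAtMost)
          define DD where "DD = c 1 * (qr 1 t - ql 1 t)"
          have Dk: "qr k t - ql k t = DD / c k" if k: "k \<in> {1..n}" for k
          proof -
            have "pr k = pr 1" by (rule ext) (rule junc_p_in[OF k])
            hence "(pr 1 has_real_derivative c k * (qr k t - ql k t)) (at t)"
              using ode_p[of k t] k by simp
            moreover have "(pr 1 has_real_derivative DD) (at t)"
              unfolding DD_def by (rule ode_p) (use n2 in auto)
            ultimately have "c k * (qr k t - ql k t) = DD" by (rule DERIV_unique)
            thus ?thesis using cnz[OF k] by (simp add: field_simps)
          qed
          have "(\<Sum>j=1..n. qr j t - ql j t) = DD * S"
            unfolding S_def sum_distrib_left by (rule sum.cong) (auto simp: Dk)
          hence "(\<Sum>j=1..n. qr j t) - (\<Sum>j=1..n. ql j t) = DD * S" by (simp add: sum_subtractf)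
          hence val: "-a * (\<Sum>j=1..n. ql j t) + a * (\<Sum>j=n+1..n+m. ql j t) = DD"
            unfolding a_def a_eq using junc_q[of t] Sneg by (simp add: field_simps)
          have "((\<lambda>s. gx s i) has_real_derivative DD) (at t)"
            unfolding DD_def gx_def using 1 ode_p[of 1 t] n2 by simp
          then show ?thesis unfolding R L A0 B0 val by simp
        next
          case 2
          have A: "(\<Sum>k<N. FA (i,k) * gx t k) = (\<Sum>k\<in>{m+n+i}. FA (i,k) * gx t k)"
            by (rule sum_support) (use 2 in \<open>auto simp: FA_def N_def\<close>)
          have B: "(\<Sum>k<n+m. FB (i,k) * gu t k) = (\<Sum>k\<in>{n+i-1}. FB (i,k) * gu t k)"
            by (rule sum_support) (use 2 in \<open>auto simp: FB_def\<close>)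
          have j: "n + i \<in> {1..n+m}" using 2 by auto
          have "((\<lambda>s. gx s i) has_real_derivative c (n+i) * (qr (n+i) t - ql (n+i) t)) (at t)"
            unfolding gx_def using 2 ode_p[OF j] by simp
          moreover have "\<not> n + i - 1 < n" using 2 by linarith
          ultimately show ?thesis unfolding R L A B using 2 n2
            by (simp add: FA_def FB_def gx_def gu_def algebra_simps)
        next
          case 3
          define j where "j = i - m"
          have j: "j \<in> {1..n+m}" "j \<in> {1..n}" using 3 j_def by auto
          have A: "(\<Sum>k<N. FA (i,k) * gx t k) = (\<Sum>k\<in>{0,i}. FA (i,k) * gx t k)"
            by (rule sum_support) (use 3 iN in \<open>auto simp: FA_def\<close>)
          have B: "(\<Sum>k<n+m. FB (i,k) * gu t k) = (\<Sum>k\<in>{i-m-1}. FB (i,k) * gu t k)"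
            by (rule sum_support) (use 3 in \<open>auto simp: FB_def\<close>)
          have "((\<lambda>s. gx s i) has_real_derivative b j * pr j t + d j * pl j t + e j * ql j t) (at t)"
            unfolding gx_def using 3 ode_q[OF j(1)] j_def by simp
          moreover have "i - Suc m < n" "Suc (i - Suc m) = i - m" using 3 by linarith+
          ultimately show ?thesis unfolding R L A B using 3 junc_p_in[OF j(2), of t] j_def
            by (simp add: FA_def FB_def gx_def gu_def algebra_simps Suc_diff_le)
        next
          case 4
          define j where "j = i - m"
          have j: "j \<in> {1..n+m}" "j \<in> {n+1..n+m}" using 4 j_def iN N_def by auto
          have A: "(\<Sum>k<N. FA (i,k) * gx t k) = (\<Sum>k\<in>{0,i-m-n,i}. FA (i,k) * gx t k)"
            by (rule sum_support) (use 4 iN in \<open>auto simp: FA_def\<close>)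
          have B: "(\<Sum>k<n+m. FB (i,k) * gu t k) = 0"
            using 4 by (simp add: FB_def)
          have "((\<lambda>s. gx s i) has_real_derivative b j * pr j t + d j * pl j t + e j * ql j t) (at t)"
            unfolding gx_def using 4 ode_q[OF j(1)] j_def by simp
          moreover have "i - (m + n) \<le> m" "n + (i - (m+n)) = i - m" using 4 iN N_def by linarith+
          ultimately show ?thesis unfolding R L A B using 4 junc_p_out[OF j(2), of t] j_def iN N_def
            by (simp add: FA_def gx_def algebra_simps)
        qed
      qed
    qed
  qed
qed

end
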